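(* Let $\mathcal{K}$ be a compact second-countable Hausdorff space, let $\mathcal{C}$ be the set of continuous functions $\mathcal{K}\to\mathbb{R}$, and let $\mathcal{F}\subseteq\mathcal{C}$ be a generating system. Let $(G_1,G_2,\dots)$ be a sequence of $\mathcal{K}$-decorated graphs with $|V(G_n)|\to\infty$. Then the following are equivalent: (i) $(G_1,G_2,\dots)$ is convergent; (ii) for every $\mathcal{C}$-decorated graph $F$, the numerical sequence $t(F,G_n)$ is convergent; (iii) for every $\mathcal{F}$-decorated graph $F$, the numerical sequence $t(F,G_n)$ is convergent.
   Context: For a set $S$ and $n\in\mathbb{Z}_+$, an $S$-decorated graph on $n$ nodes is a symmetric map $G:[n]\times[n]\to S$ (i.e. $G(x,y)=G(y,x)$); write $G_{x,y}=G(x,y)$ and $V(G)=[n]$. The set of $\mathcal{K}$-decorated graphs on $k$ nodes is a compact space with the product topology. A subset $\mathcal{F}\subseteq\mathcal{C}$ is a generating system if the linear span of $\mathcal{F}$ is dense in $\mathcal{C}$ in the supremum norm. Sampling: for a $\mathcal{K}$-decorated graph $G$ and $k\le|V(G)|$, pick an ordered $k$-tuple $(v_1,\dots,v_k)$ of distinct nodes of $G$ uniformly at random and let $\mathbb{G}(G,k)$ be the random $k$-node decorated graph with entries $\mathbb{G}(G,k)_{i,j}=G_{v_i,v_j}$ for $1\le i<j\le k$. A sequence $(G_n)$ with $|V(G_n)|\to\infty$ is convergent if for every $k\in\mathbb{N}$ and every continuous function $f$ on the space of these sampled decorated graphs (i.e. of the entries $(i,j)$, $1\le i<j\le k$), the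 limit $\lim_{n\to\infty}E\bigl(f(\mathbb{G}(G_n,k))\bigr)$ exists. For an $\mathcal{F}'$-decorated graph $F$ on $[k]$ (where $\mathcal{F}'\subseteq\mathcal{C}$) and a $\mathcal{K}$-decorated graph $G$, the weight of a map $\varphi:[k]\to V(G)$ is $w(\varphi)=\prod_{1\le i<j\le k}F_{i,j}\bigl(G_{\varphi(i),\varphi(j)}\bigr)$, $\hom(F,G)=\sum_{\varphi:[k]\to V(G)}w(\varphi)$, and $t(F,G)=\hom(F,G)/|V(G)|^k$. *)

theory Defs
  imports "HOL-Analysis.Analysis"
begin

text \<open>A decorated graph on n nodes is represented by a map G :: nat => nat => 'a,
  whose node set is {0..<n}; only the values on {0..<n} x {0..<n} matter.\<close>

definition dgraph :: "nat \<Rightarrow> (nat \<Rightarrow> nat \<Rightarrow> 'a) \<Rightarrow> bool" where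
  "dgraph n G \<longleftrightarrow> (\<forall>x<n. \<forall>y<n. G x y = G y x)"

definition dgraph_in :: "'a set \<Rightarrow> nat \<Rightarrow> (nat \<Rightarrow> nat \<Rightarrow> 'a) \<Rightarrow> bool" where
  "dgraph_in S k F \<longleftrightarrow> (\<forall>i<k. \<forall>j<k. F i j \<in> S \<and> F i j = F j i)"

definition cont_fns :: "('k::topological_space \<Rightarrow> real) set" where
  "cont_fns = {f. continuous_on UNIV f}"

definition generating_system :: "('k::topological_space \<Rightarrow> real) set \<Rightarrow> bool" where
  "generating_system Fam \<longleftrightarrow> Fam \<subseteq> cont_fns \<and>
     (\<forall>f\<in>cont_fns. \<forall>e>0. \<exists>m (c::nat \<Rightarrow> real) h.
        (\<forall>i<m. h i \<in> Fam) \<and> (\<forall>x. \<bar>f x - (\<Sum>i<m. c i * h i x)\<bar> < e))"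

definition pairs :: "nat \<Rightarrow> (nat \<times> nat) set" where
  "pairs k = {(i,j). i < j \<and> j < k}"

definition inj_tuples :: "nat \<Rightarrow> nat \<Rightarrow> (nat \<Rightarrow> nat) set" where
  "inj_tuples k n = {\<phi> \<in> {0..<k} \<rightarrow>\<^sub>E {0..<n}. inj_on \<phi> {0..<k}}"

text \<open>E f(G(G,k)) for the uniformly random sampled k-node graph.\<close>
definition sample_exp ::
  "nat \<Rightarrow> (nat \<Rightarrow> nat \<Rightarrow> 'k) \<Rightarrow> nat \<Rightarrow> ((nat \<times> nat \<Rightarrow> 'k) \<Rightarrow> real) \<Rightarrow> real" where
  "sample_exp n G k f =
     (\<Sum>\<phi>\<in>inj_tuples k n. f (restrict (\<lambda>(i,j). G (\<phi> i) (\<phi> j)) (pairs k)))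
       / real (card (inj_tuples k n))"

definition dg_convergent ::
  "(nat \<Rightarrow> nat) \<Rightarrow> (nat \<Rightarrow> nat \<Rightarrow> nat \<Rightarrow> 'k::topological_space) \<Rightarrow> bool" where
  "dg_convergent N Gs \<longleftrightarrow>
     (\<forall>k (f::(nat \<times> nat \<Rightarrow> 'k) \<Rightarrow> real).
        continuous_map (product_topology (\<lambda>_. euclidean) (pairs k)) euclidean f \<longrightarrow>
        convergent (\<lambda>n. sample_exp (N n) (Gs n) k f))"

definition hom_dens ::
  "nat \<Rightarrow> (nat \<Rightarrow> nat \<Rightarrow> ('k \<Rightarrow> real)) \<Rightarrow> nat \<Rightarrow> (nat \<Rightarrow> nat \<Rightarrow> 'k) \<Rightarrow> real" where
  "hom_dens k F n G =
     (\<Sum>\<phi>\<in>{0..<k} \<rightarrow>\<^sub>E {0..<n}. \<Prod>(i,j)\<in>pairs k. F i j (G (\<phi> i) (\<phi> j))) / real n ^ k"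

end

theory Submission
  imports Defs
begin



instance "fun" :: (type, t0_space) t0_space
proof
  fix x y :: "'a \<Rightarrow> 'b"
  assume "x \<noteq> y"
  then obtain i where i: "x i \<noteq> y i" by auto
  then obtain U where U: "open U" "(x i \<in> U \<and> y i \<notin> U) \<or> (x i \<notin> U \<and> y i \<in> U)"
    using t0_space_class.t0_space[OF i] by blast
  have "open ((\<lambda>f. f i) -` U)" by (rule open_vimage[OF U(1)]) simp
  then show "\<exists>U. open U \<and> (x \<in> U) \<noteq> (y \<in> U)" using U by (intro exI[of _ "(\<lambda>f. f i) -` U"]) auto
qed

instance "fun" :: (type, t1_space) t1_space
proof
  fix x y :: "'a \<Rightarrow> 'b"
  assume "x \<noteq> y"
  then obtain i where i: "x i \<noteq> y i" by auto
  then obtain U where U: "open U" "x i \<in> U" "y i \<notin> U"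
    using t1_space_class.t1_space[OF i] by blast
  have "open ((\<lambda>f. f i) -` U)" by (rule open_vimage[OF U(1)]) simp
  then show "\<exists>U. open U \<and> x \<in> U \<and> y \<notin> U" using U by (intro exI[of _ "(\<lambda>f. f i) -` U"]) auto
qed

instance "fun" :: (type, t2_space) t2_space
proof
  fix x y :: "'a \<Rightarrow> 'b"
  assume "x \<noteq> y"
  then obtain i where i: "x i \<noteq> y i" by auto
  then obtain U V where UV: "open U" "open V" "x i \<in> U" "y i \<in> V" "U \<inter> V = {}"
    using hausdorff[OF i] by blast
  have o1: "open ((\<lambda>f. f i) -` U)" by (rule open_vimage[OF UV(1)]) simp
  have o2: "open ((\<lambda>f. f i) -` V)" by (rule open_vimage[OF UV(2)]) simp
  show "\<exists>U V. open U \<and> open V \<and> x \<in> U \<and> y \<in> V \<and> U \<inter> V = {}"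
    using o1 o2 UV by (intro exI[of _ "(\<lambda>f. f i) -` U"] exI[of _ "(\<lambda>f. f i) -` V"]) auto
qed

lemma Hausdorff_t2: "Hausdorff_space (euclidean :: 'a::t2_space topology)"
  unfolding Hausdorff_space_def disjnt_def
proof (intro allI impI)
  fix x y :: 'a
  assume "x \<in> topspace euclidean \<and> y \<in> topspace euclidean \<and> x \<noteq> y"
  then obtain U V where "open U" "open V" "x \<in> U" "y \<in> V" "U \<inter> V = {}"
    using hausdorff[of x y] by blast
  then show "\<exists>U V. openin euclidean U \<and> openin euclidean V \<and> x \<in> U \<and> y \<in> V \<and> U \<inter> V = {}"
    by auto
qed

lemma sep_fun:
  fixes a b :: "'k::t2_space"
  assumes "compact (UNIV :: 'k set)" "a \<noteq> b"
  shows "\<exists>g::'k\<Rightarrow>real. continuous_on UNIV g \<and> g a \<noteq> g b"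
proof -
  have "normal_space (euclidean :: 'k topology)"
    by (rule compact_Hausdorff_or_regular_imp_normal_space)
       (use assms Hausdorff_t2 in \<open>auto simp: compact_space_def\<close>)
  moreover have "closedin euclidean {a}" "closedin euclidean {b}"
    using closedin_Hausdorff_singleton[OF Hausdorff_t2] by auto
  ultimately obtain f where f: "continuous_map euclidean (top_of_set {0..1::real}) f" "f ` {a} \<subseteq> {0}" "f ` {b} \<subseteq> {1}"
    using Urysohn_lemma[of euclidean "{a}" "{b}" 0 1] assms by (auto simp: disjnt_def)
  have "continuous_map euclidean euclidean f"
    using f(1) continuous_map_into_fulltopology by blast
  then show ?thesis using f by (intro exI[of _ f]) auto
qed




definition prodf :: "nat \<Rightarrow> (nat \<Rightarrow> nat \<Rightarrow> 'k \<Rightarrow> real) \<Rightarrow> (nat \<times> nat \<Rightarrow> 'k) \<Rightarrow> real" where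
  "prodf k F x = (\<Prod>(i,j)\<in>pairs k. F i j (x (i,j)))"

lemma finite_pairs[simp]: "finite (pairs k)"
proof -
  have "pairs k \<subseteq> {..<k} \<times> {..<k}" by (auto simp: pairs_def)
  then show ?thesis by (rule finite_subset) auto
qed

lemma card_inj_tuples: "card (inj_tuples k n) = (\<Prod>i\<in>{0..<k}. n - i)"
  using card_inj_on_subset_funcset[of "{0..<k}" "{0..<n}" "{0..<k}"]
  by (simp add: inj_tuples_def)

lemma ratio_lim: "(\<lambda>n. real (card (inj_tuples k n)) / real n ^ k) \<longlonglongrightarrow> 1"
proof -
  have ev: "\<forall>\<^sub>F n in sequentially. (\<Prod>i\<in>{0..<k}. (real n - real i) / real n) = real (card (inj_tuples k n)) / real n ^ k"
  proof (rule eventually_sequentiallyI[of k])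
    fix n assume "k \<le> n"
    then have "real (card (inj_tuples k n)) = (\<Prod>i\<in>{0..<k}. (real n - real i))"
      by (simp add: card_inj_tuples of_nat_prod of_nat_diff)
    moreover have "real n ^ k = (\<Prod>i\<in>{0..<k}. real n)" by simp
    ultimately show "(\<Prod>i\<in>{0..<k}. (real n - real i) / real n) = real (card (inj_tuples k n)) / real n ^ k"
      by (simp add: prod_dividef)
  qed
  have "(\<lambda>n. \<Prod>i\<in>{0..<k}. (real n - real i) / real n) \<longlonglongrightarrow> (\<Prod>i\<in>{0..<k}. 1)"
  proof (rule tendsto_prod)
    fix i
    have "(\<lambda>n. 1 - real i / real n) \<longlonglongrightarrow> 1"
      using tendsto_diff[OF tendsto_const lim_const_over_n, of 1 "real i"] by simp
    moreover have "\<forall>\<^sub>F n in sequentially. 1 - real i / real n = (real n - real i) / real n"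
      by (rule eventually_sequentiallyI[of 1]) (simp add: field_simps)
    ultimately show "(\<lambda>n. (real n - real i) / real n) \<longlonglongrightarrow> 1"
      by (rule Lim_transform_eventually)
  qed
  then have "(\<lambda>n. real (card (inj_tuples k n)) / real n ^ k) \<longlonglongrightarrow> (\<Prod>i\<in>{0..<k}. 1)"
    using ev by (rule Lim_transform_eventually)
  then show ?thesis by simp
qed





lemma abs_ineq:
  fixes s1 s2 c N M :: real
  assumes "\<bar>s1\<bar> \<le> M * c" "\<bar>s2\<bar> \<le> M * (N - c)" "0 < c" "c \<le> N"
  shows "\<bar>(s1 + s2) / N - s1 / c\<bar> \<le> 2 * M * (1 - c / N)"
proof -
  have N: "0 < N" using assms by simp
  have M: "0 \<le> M" using assms(1,3) by (smt (verit) mult_neg_pos)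
  have eq: "(s1 + s2) / N - s1 / c = s1 * ((c - N) / (N * c)) + s2 / N"
    using N assms(3) by (simp add: field_simps)
  have "\<bar>s1 * ((c - N) / (N * c))\<bar> = \<bar>s1\<bar> * ((N - c) / (N * c))"
    using N assms(3,4) by (simp add: abs_mult abs_divide)
  also have "\<dots> \<le> M * c * ((N - c) / (N * c))"
    using N assms by (intro mult_right_mono) auto
  also have "\<dots> = M * (1 - c / N)"
    using N assms(3) by (simp add: field_simps)
  finally have 1: "\<bar>s1 * ((c - N) / (N * c))\<bar> \<le> M * (1 - c / N)" .
  have "\<bar>s2 / N\<bar> = \<bar>s2\<bar> / N" using N by simp
  also have "\<dots> \<le> M * (N - c) / N" using N assms(2) by (intro divide_right_mono) auto
  also have "\<dots> = M * (1 - c / N)" using N by (simp add: field_simps)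
  finally have 2: "\<bar>s2 / N\<bar> \<le> M * (1 - c / N)" .
  have e2: "2 * M * (1 - c / N) = M * (1 - c / N) + M * (1 - c / N)" by simp
  show ?thesis unfolding eq e2 by (rule order_trans[OF abs_triangle_ineq add_mono[OF 1 2]])
qed

lemma compare:
  fixes G :: "nat \<Rightarrow> nat \<Rightarrow> 'k" and F :: "nat \<Rightarrow> nat \<Rightarrow> 'k \<Rightarrow> real"
  assumes B: "\<And>i j t. (i,j) \<in> pairs k \<Longrightarrow> \<bar>F i j t\<bar> \<le> B" and kn: "k \<le> n" and n: "0 < n"
  shows "\<bar>hom_dens k F n G - sample_exp n G k (prodf k F)\<bar>
           \<le> 2 * \<bar>B\<bar> ^ card (pairs k) * (1 - real (card (inj_tuples k n)) / real n ^ k)"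
proof -
  define A where "A = {0..<k} \<rightarrow>\<^sub>E {0..<n}"
  define I where "I = inj_tuples k n"
  define w where "w = (\<lambda>\<phi>. \<Prod>(i,j)\<in>pairs k. F i j (G (\<phi> i) (\<phi> j)))"
  define M where "M = \<bar>B\<bar> ^ card (pairs k)"
  have finA: "finite A" unfolding A_def by (simp add: finite_PiE)
  have IA: "I \<subseteq> A" unfolding I_def A_def inj_tuples_def by auto
  have cardA: "card A = n ^ k" unfolding A_def by (simp add: card_funcsetE)
  have cI: "card I = (\<Prod>i\<in>{0..<k}. n - i)" unfolding I_def by (rule card_inj_tuples)
  have cpos: "0 < card I" unfolding cI using kn by (auto simp: prod_pos)
  have cle: "card I \<le> card A" using IA finA by (rule card_mono[rotated])
  have wb: "\<bar>w \<phi>\<bar> \<le> M" for \<phi>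
  proof -
    have "\<bar>w \<phi>\<bar> = (\<Prod>p\<in>pairs k. \<bar>(\<lambda>(i,j). F i j (G (\<phi> i) (\<phi> j))) p\<bar>)"
      unfolding w_def by (rule abs_prod)
    also have "\<dots> \<le> (\<Prod>p\<in>pairs k. \<bar>B\<bar>)"
      by (rule prod_mono) (auto intro: order_trans[OF B abs_ge_self])
    finally show ?thesis by (simp add: M_def)
  qed
  have s1: "\<bar>sum w I\<bar> \<le> M * real (card I)"
    using sum_abs[of w I] sum_bounded_above[of I "\<lambda>\<phi>. \<bar>w \<phi>\<bar>" M] wb
    by (smt (verit, ccfv_SIG) mult.commute)
  have s2: "\<bar>sum w (A - I)\<bar> \<le> M * (real (card A) - real (card I))"
  proof -
    have "\<bar>sum w (A - I)\<bar> \<le> M * real (card (A - I))"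
      using sum_abs[of w "A - I"] sum_bounded_above[of "A - I" "\<lambda>\<phi>. \<bar>w \<phi>\<bar>" M] wb
      by (smt (verit, ccfv_SIG) mult.commute)
    also have "card (A - I) = card A - card I"
      using IA finA by (simp add: card_Diff_subset finite_subset)
    finally show ?thesis using cle by (simp add: of_nat_diff)
  qed
  have hom: "hom_dens k F n G = (sum w I + sum w (A - I)) / real (card A)"
    unfolding hom_dens_def w_def A_def[symmetric] cardA
    using sum.subset_diff[OF IA finA, of w] by (simp add: w_def add.commute)
  have samp: "sample_exp n G k (prodf k F) = sum w I / real (card I)"
    unfolding sample_exp_def I_def[symmetric] w_def prodf_def
    by (intro arg_cong2[where f="(/)"] sum.cong prod.cong refl) auto
  have "\<bar>hom_dens k F n G - sample_exp n G k (prodf k F)\<bar> \<le> 2 * M * (1 - real (card I) / real (card A))"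
    unfolding hom samp by (rule abs_ineq[OF s1 s2]) (use cpos cle in auto)
  then show ?thesis unfolding M_def I_def cardA by simp
qed




lemma diff_lim:
  fixes Gs :: "nat \<Rightarrow> nat \<Rightarrow> nat \<Rightarrow> 'k" and F :: "nat \<Rightarrow> nat \<Rightarrow> 'k \<Rightarrow> real"
  assumes B: "\<And>i j t. (i,j) \<in> pairs k \<Longrightarrow> \<bar>F i j t\<bar> \<le> B"
    and N: "filterlim N at_top sequentially"
  shows "(\<lambda>n. hom_dens k F (N n) (Gs n) - sample_exp (N n) (Gs n) k (prodf k F)) \<longlonglongrightarrow> 0"
proof (rule Lim_null_comparison)
  define r where "r = (\<lambda>n. real (card (inj_tuples k n)) / real n ^ k)"
  have "(\<lambda>n. r (N n)) \<longlonglongrightarrow> 1"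
    using filterlim_compose[OF ratio_lim N] unfolding r_def by simp
  then have "(\<lambda>n. 2 * \<bar>B\<bar> ^ card (pairs k) * (1 - r (N n))) \<longlonglongrightarrow> 2 * \<bar>B\<bar> ^ card (pairs k) * (1 - 1)"
    by (intro tendsto_intros)
  then show "(\<lambda>n. 2 * \<bar>B\<bar> ^ card (pairs k) * (1 - r (N n))) \<longlonglongrightarrow> 0" by simp
  have "\<forall>\<^sub>F n in sequentially. Suc k \<le> N n"
    using N by (simp add: filterlim_at_top)
  then show "\<forall>\<^sub>F n in sequentially. norm (hom_dens k F (N n) (Gs n) - sample_exp (N n) (Gs n) k (prodf k F))
       \<le> 2 * \<bar>B\<bar> ^ card (pairs k) * (1 - r (N n))"
  proof (rule eventually_mono)
    fix n assume "Suc k \<le> N n"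
    then have "k \<le> N n" "0 < N n" by auto
    from compare[OF B this, where G="Gs n"]
    show "norm (hom_dens k F (N n) (Gs n) - sample_exp (N n) (Gs n) k (prodf k F))
       \<le> 2 * \<bar>B\<bar> ^ card (pairs k) * (1 - r (N n))"
      unfolding r_def real_norm_def by simp
  qed
qed

lemma conv_diff:
  fixes a b :: "nat \<Rightarrow> real"
  assumes "(\<lambda>n. a n - b n) \<longlonglongrightarrow> 0"
  shows "convergent a \<longleftrightarrow> convergent b"
proof
  assume "convergent a"
  then obtain l where "a \<longlonglongrightarrow> l" by (auto simp: convergent_def)
  from tendsto_diff[OF this assms] have "b \<longlonglongrightarrow> l" by simp
  then show "convergent b" by (auto simp: convergent_def)
next
  assume "convergent b"
  then obtain l where "b \<longlonglongrightarrow> l" by (auto simp: convergent_def)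
  from tendsto_add[OF this assms] have "a \<longlonglongrightarrow> l" by simp
  then show "convergent a" by (auto simp: convergent_def)
qed

lemma conv_approx:
  fixes a :: "nat \<Rightarrow> real"
  assumes "\<And>e. e > 0 \<Longrightarrow> \<exists>b. convergent b \<and> (\<forall>n. \<bar>a n - b n\<bar> \<le> e)"
  shows "convergent a"
proof -
  have "Cauchy a"
  proof (rule metric_CauchyI)
    fix e :: real assume e: "e > 0"
    then obtain b where b: "convergent b" "\<And>n. \<bar>a n - b n\<bar> \<le> e / 4"
      using assms[of "e/4"] by auto
    then have "Cauchy b" by (simp add: convergent_Cauchy)
    then obtain M where M: "\<And>m n. m \<ge> M \<Longrightarrow> n \<ge> M \<Longrightarrow> dist (b m) (b n) < e / 4"
      using e unfolding Cauchy_def by (meson divide_pos_pos zero_less_numeral)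
    show "\<exists>M. \<forall>m\<ge>M. \<forall>n\<ge>M. dist (a m) (a n) < e"
    proof (intro exI allI impI)
      fix m n assume "m \<ge> M" "n \<ge> M"
      then have "\<bar>b m - b n\<bar> < e / 4" using M by (simp add: dist_real_def)
      moreover have "\<bar>a m - a n\<bar> \<le> \<bar>a m - b m\<bar> + \<bar>b m - b n\<bar> + \<bar>a n - b n\<bar>" by arith
      ultimately show "dist (a m) (a n) < e" using b(2)[of m] b(2)[of n] e
        by (simp add: dist_real_def)
    qed
  qed
  then show ?thesis by (simp add: Cauchy_convergent_iff)
qed

inductive lc :: "('a \<Rightarrow> real) set \<Rightarrow> ('a \<Rightarrow> real) \<Rightarrow> bool" for Q where
  lc0: "lc Q (\<lambda>x. 0)"
| lcS: "q \<in> Q \<Longrightarrow> lc Q g \<Longrightarrow> lc Q (\<lambda>x. c * q x + g x)"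

lemma lc_add: "lc Q f \<Longrightarrow> lc Q g \<Longrightarrow> lc Q (\<lambda>x. f x + g x)"
proof (induction f rule: lc.induct)
  case lc0 then show ?case by simp
next
  case (lcS q f c)
  have "lc Q (\<lambda>x. f x + g x)" using lcS.IH lcS.prems by blast
  from lc.lcS[OF lcS.hyps(1) this, of c] show ?case by (simp add: add.assoc)
qed

lemma lc_scale: "lc Q f \<Longrightarrow> lc Q (\<lambda>x. a * f x)"
proof (induction f rule: lc.induct)
  case lc0 then show ?case by (simp add: lc.lc0)
next
  case (lcS q f c)
  from lc.lcS[OF lcS.hyps(1) lcS.IH, of "a * c"] show ?case by (simp add: algebra_simps)
qed

lemma lc_single: assumes "q \<in> Q" shows "lc Q (\<lambda>x. c * q x)"
proof -
  have "lc Q (\<lambda>x. c * q x + 0)" by (rule lc.lcS[OF assms lc.lc0])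
  then show ?thesis by simp
qed

lemma lc_const: "(\<lambda>x. 1) \<in> Q \<Longrightarrow> lc Q (\<lambda>x. c)"
  using lc_single[of "\<lambda>x. 1" Q c] by simp

lemma lc_mult1:
  assumes cl: "\<And>f g. f \<in> Q \<Longrightarrow> g \<in> Q \<Longrightarrow> (\<lambda>x. f x * g x) \<in> Q"
    and qQ: "q \<in> Q"
  shows "lc Q g \<Longrightarrow> lc Q (\<lambda>x. q x * g x)"
proof (induction g rule: lc.induct)
  case lc0 then show ?case by (simp add: lc.lc0)
next
  case (lcS q' g c)
  have "(\<lambda>x. q x * q' x) \<in> Q" using cl[OF qQ lcS.hyps(1)] .
  from lc.lcS[OF this lcS.IH, of c] show ?case by (simp add: algebra_simps)
qed

lemma lc_mult:
  assumes cl: "\<And>f g. f \<in> Q \<Longrightarrow> g \<in> Q \<Longrightarrow> (\<lambda>x. f x * g x) \<in> Q"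
  shows "lc Q f \<Longrightarrow> lc Q g \<Longrightarrow> lc Q (\<lambda>x. f x * g x)"
proof (induction f rule: lc.induct)
  case lc0 then show ?case by (simp add: lc.lc0)
next
  case (lcS q f c)
  have 1: "lc Q (\<lambda>x. q x * g x)" by (rule lc_mult1[OF cl lcS.hyps(1) lcS.prems])
  have 2: "lc Q (\<lambda>x. f x * g x)" using lcS.IH lcS.prems by blast
  from lc_add[OF lc_scale[OF 1, of c] 2] show ?case by (simp add: algebra_simps)
qed

lemma lc_sum:
  assumes "finite A" "\<And>a. a \<in> A \<Longrightarrow> q a \<in> Q"
  shows "lc Q (\<lambda>x. \<Sum>a\<in>A. c a * q a x)"
  using assms
proof (induction A rule: finite_induct)
  case empty then show ?case by (simp add: lc.lc0)
next
  case (insert a A)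
  have "lc Q (\<lambda>x. \<Sum>a\<in>A. c a * q a x)" using insert by blast
  from lc.lcS[OF insert.prems[of a] this, of "c a"] insert.hyps show ?case by simp
qed




definition QC :: "nat \<Rightarrow> ((nat \<times> nat \<Rightarrow> 'k::topological_space) \<Rightarrow> real) set" where
  "QC k = {q. \<exists>h. (\<forall>p. continuous_on UNIV (h p)) \<and> q = (\<lambda>x. \<Prod>p\<in>pairs k. h p (x p))}"

definition QF :: "('k \<Rightarrow> real) set \<Rightarrow> nat \<Rightarrow> ((nat \<times> nat \<Rightarrow> 'k) \<Rightarrow> real) set" where
  "QF Fam k = {q. \<exists>h. (\<forall>p\<in>pairs k. h p \<in> Fam) \<and> q = (\<lambda>x. \<Prod>p\<in>pairs k. h p (x p))}"

lemma QC_cont: "q \<in> QC k \<Longrightarrow> continuous_on UNIV q"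
proof -
  assume "q \<in> QC k"
  then obtain h where h: "\<And>p. continuous_on UNIV (h p)" "q = (\<lambda>x. \<Prod>p\<in>pairs k. h p (x p))"
    unfolding QC_def by blast
  have "continuous_on UNIV (\<lambda>x. \<Prod>p\<in>pairs k. h p (x p))"
  proof (rule continuous_on_prod)
    fix p
    show "continuous_on UNIV (\<lambda>x. h p (x p))"
      by (rule continuous_on_compose2[OF h(1) continuous_on_product_coordinates]) auto
  qed
  then show ?thesis using h(2) by simp
qed

lemma QC_mult: "f \<in> QC k \<Longrightarrow> g \<in> QC k \<Longrightarrow> (\<lambda>x. f x * g x) \<in> QC k"
proof -
  assume "f \<in> QC k" "g \<in> QC k"
  then obtain h h' where h: "\<And>p. continuous_on UNIV (h p)" "f = (\<lambda>x. \<Prod>p\<in>pairs k. h p (x p))"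
    and h': "\<And>p. continuous_on UNIV (h' p)" "g = (\<lambda>x. \<Prod>p\<in>pairs k. h' p (x p))"
    unfolding QC_def by blast
  have "\<forall>p. continuous_on UNIV (\<lambda>t. h p t * h' p t)"
    using h(1) h'(1) by (auto intro: continuous_on_mult)
  moreover have "(\<lambda>x. f x * g x) = (\<lambda>x. \<Prod>p\<in>pairs k. (\<lambda>t. h p t * h' p t) (x p))"
    unfolding h(2) h'(2) by (simp add: prod.distrib)
  ultimately show ?thesis unfolding QC_def
    by (intro CollectI exI[of _ "\<lambda>p t. h p t * h' p t"] conjI)
qed

lemma QC_one: "(\<lambda>x. 1) \<in> QC k"
  unfolding QC_def by (rule CollectI, rule exI[of _ "\<lambda>p t. 1"]) auto

lemma lc_QC_cont: "lc (QC k) g \<Longrightarrow> continuous_on S g"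
proof (induction g rule: lc.induct)
  case lc0 then show ?case by simp
next
  case (lcS q g c)
  have "continuous_on S q" using QC_cont[OF lcS.hyps(1)] continuous_on_subset by blast
  from continuous_on_add[OF continuous_on_mult[OF continuous_on_const this] lcS.IH]
  show ?case .
qed





lemma SW:
  fixes f :: "(nat \<times> nat \<Rightarrow> 'k::t2_space) \<Rightarrow> real"
  assumes cK: "compact (UNIV::'k set)"
    and f: "continuous_map (product_topology (\<lambda>_. euclidean) (pairs k)) euclidean f" and e: "0 < e"
  shows "\<exists>g. lc (QC k) g \<and> (\<forall>x\<in>PiE (pairs k) (\<lambda>_. UNIV). \<bar>f x - g x\<bar> < e)"
proof -
  define T where "T = product_topology (\<lambda>_. euclidean::'k topology) (pairs k)"
  define S where "S = PiE (pairs k) (\<lambda>_. UNIV::'k set)"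
  have tsT: "topspace T = S" unfolding T_def S_def by simp
  have idc: "continuous_map T euclidean (\<lambda>x. x)"
    unfolding euclidean_product_topology[symmetric] continuous_map_componentwise_UNIV
  proof
    fix i
    show "continuous_map T euclidean (\<lambda>x. x i)"
    proof (cases "i \<in> pairs k")
      case True then show ?thesis unfolding T_def by (rule continuous_map_product_projection)
    next
      case False
      show ?thesis
      proof (rule continuous_map_eq[of T euclidean "\<lambda>x. undefined"])
        show "continuous_map T euclidean (\<lambda>x. undefined)" by simp
        fix x assume "x \<in> topspace T"
        then have "x \<in> PiE (pairs k) (\<lambda>_. UNIV)" using tsT S_def by simp
        from PiE_arb[OF this False] show "undefined = x i" by simp
      qed
    qed
  qed
  have "compact_space T"
    unfolding T_def compact_space_product_topology using cK by (simp add: compact_space_def)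
  then have "compactin euclidean ((\<lambda>x. x) ` topspace T)"
    unfolding compact_space_def by (rule image_compactin[OF _ idc])
  then have cS: "compact S" using tsT by simp
  have ci: "continuous_map (top_of_set S) T (\<lambda>x. x)"
    unfolding T_def continuous_map_componentwise
  proof (intro conjI ballI)
    show "(\<lambda>x. x) ` topspace (top_of_set S) \<subseteq> extensional (pairs k)"
      by (auto simp: S_def PiE_def)
    fix i
    show "continuous_map (top_of_set S) euclidean (\<lambda>x. x i)"
      using continuous_on_subset[OF continuous_on_product_coordinates[of i]] by auto
  qed
  have fc: "continuous_on S f"
    using continuous_map_compose[OF ci f[folded T_def]] by (simp add: o_def)
  define Q where "Q = (QC k :: ((nat \<times> nat \<Rightarrow> 'k) \<Rightarrow> real) set)"
  have Qm: "\<And>f g. f \<in> Q \<Longrightarrow> g \<in> Q \<Longrightarrow> (\<lambda>x. f x * g x) \<in> Q"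
    unfolding Q_def by (rule QC_mult)
  have Q1: "(\<lambda>x. 1) \<in> Q" unfolding Q_def by (rule QC_one)
  have Qc: "\<And>g. lc Q g \<Longrightarrow> continuous_on S g" unfolding Q_def by (rule lc_QC_cont)
  have "\<exists>g. lc Q g \<and> (\<forall>x\<in>S. \<bar>f x - g x\<bar> < e)"
  proof (rule Stone_Weierstrass_HOL[OF cS _ _ _ _ _ fc e])
    fix c :: real show "lc Q (\<lambda>x. c)" by (rule lc_const[OF Q1])
  next
    fix g assume "lc Q g" then show "continuous_on S g" by (rule Qc)
  next
    fix f g assume "lc Q f \<and> lc Q g" then show "lc Q (\<lambda>x. f x + g x)"
      using lc_add[of Q f g] by blast
  next
    fix f g assume "lc Q f \<and> lc Q g" then show "lc Q (\<lambda>x. f x * g x)"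
      using lc_mult[OF Qm, of f g] by blast
  next
    fix x y assume xy: "x \<in> S \<and> y \<in> S \<and> x \<noteq> y"
    then obtain p where p: "x p \<noteq> y p" by (meson ext)
    have pk: "p \<in> pairs k"
    proof (rule ccontr)
      assume "p \<notin> pairs k"
      then have "x p = undefined" "y p = undefined" using xy PiE_arb[of x "pairs k" "\<lambda>_. UNIV" p] PiE_arb[of y "pairs k" "\<lambda>_. UNIV" p]
        by (simp_all add: S_def)
      then show False using p by simp
    qed
    obtain g :: "'k \<Rightarrow> real" where g: "continuous_on UNIV g" "g (x p) \<noteq> g (y p)"
      using sep_fun[OF cK p] by blast
    define h where "h = (\<lambda>p'. if p' = p then g else (\<lambda>_. 1::real))"
    define q where "q = (\<lambda>z::nat\<times>nat\<Rightarrow>'k. \<Prod>p'\<in>pairs k. h p' (z p'))"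
    have qz: "q z = g (z p)" for z
    proof -
      have "q z = (\<Prod>p'\<in>pairs k. if p' = p then g (z p') else 1)"
        unfolding q_def h_def by (rule prod.cong) auto
      also have "\<dots> = g (z p)" using pk by simp
      finally show ?thesis .
    qed
    have hc: "\<forall>p'. continuous_on UNIV (h p')" by (simp add: h_def g(1))
    have "q \<in> Q" unfolding Q_def QC_def q_def
      by (rule CollectI, rule exI[of _ h], rule conjI[OF hc refl])
    from lc_single[OF this, of 1] have "lc Q q" by simp
    moreover have "q x \<noteq> q y" using g(2) qz by simp
    ultimately show "\<exists>f. lc Q f \<and> f x \<noteq> f y" by blast
  qed
  then show ?thesis unfolding S_def Q_def .
qed




lemma prod_abs_bound:
  fixes b :: "'i \<Rightarrow> real"
  assumes "\<And>p. p \<in> P \<Longrightarrow> \<bar>b p\<bar> \<le> C"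
  shows "\<bar>prod b P\<bar> \<le> C ^ card P"
proof -
  have "\<bar>prod b P\<bar> = (\<Prod>p\<in>P. \<bar>b p\<bar>)" by (rule abs_prod)
  also have "\<dots> \<le> (\<Prod>p\<in>P. C)" by (rule prod_mono) (use assms in auto)
  also have "\<dots> = C ^ card P" by simp
  finally show ?thesis .
qed

lemma prod_diff_bound:
  fixes a b :: "'i \<Rightarrow> real"
  assumes "finite P" "\<And>p. p \<in> P \<Longrightarrow> \<bar>a p\<bar> \<le> B" "\<And>p. p \<in> P \<Longrightarrow> \<bar>a p - b p\<bar> \<le> \<delta>"
    and d: "0 \<le> \<delta>" "\<delta> \<le> 1" and B: "0 \<le> B"
  shows "\<bar>prod a P - prod b P\<bar> \<le> real (card P) * \<delta> * (B+1) ^ card P"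
  using assms(1-3)
proof (induction P rule: finite_induct)
  case empty then show ?case by simp
next
  case (insert x P)
  define A where "A = prod a P"
  define Bb where "Bb = prod b P"
  define c where "c = real (card P)"
  define Y where "Y = (B+1) ^ card P"
  have Y0: "0 \<le> Y" unfolding Y_def using B by simp
  have IH: "\<bar>A - Bb\<bar> \<le> c * \<delta> * Y" unfolding A_def Bb_def c_def Y_def
    using insert by auto
  have bb: "\<bar>b p\<bar> \<le> B + 1" if "p \<in> insert x P" for p
    using insert.prems(1)[OF that] insert.prems(2)[OF that] d by linarith
  have hB: "\<bar>Bb\<bar> \<le> Y" unfolding Bb_def Y_def by (rule prod_abs_bound) (use bb in auto)
  have ax: "\<bar>a x\<bar> \<le> B" "\<bar>a x - b x\<bar> \<le> \<delta>" using insert.prems by auto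
  have eq: "prod a (insert x P) - prod b (insert x P) = a x * (A - Bb) + (a x - b x) * Bb"
    using insert.hyps unfolding A_def Bb_def by (simp add: algebra_simps)
  have "\<bar>a x * (A - Bb) + (a x - b x) * Bb\<bar> \<le> \<bar>a x\<bar> * \<bar>A - Bb\<bar> + \<bar>a x - b x\<bar> * \<bar>Bb\<bar>"
    by (metis abs_mult abs_triangle_ineq)
  also have "\<dots> \<le> B * (c * \<delta> * Y) + \<delta> * Y"
    by (intro add_mono mult_mono) (use ax IH hB d B in auto)
  also have "\<dots> \<le> (B + 1) * (c * \<delta> * Y) + \<delta> * ((B + 1) * Y)"
  proof (rule add_mono)
    have "0 \<le> c * \<delta> * Y" using d Y0 by (simp add: c_def)
    then show "B * (c * \<delta> * Y) \<le> (B + 1) * (c * \<delta> * Y)" by (simp add: algebra_simps)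
    have "Y \<le> (B + 1) * Y" using B Y0 by (simp add: algebra_simps)
    then show "\<delta> * Y \<le> \<delta> * ((B + 1) * Y)" using d by (intro mult_left_mono) auto
  qed
  also have "\<dots> = real (card (insert x P)) * \<delta> * (B + 1) ^ card (insert x P)"
    using insert.hyps unfolding c_def Y_def by (simp add: algebra_simps)
  finally show ?case unfolding eq .
qed

lemma cont_bound:
  fixes f :: "'k::topological_space \<Rightarrow> real"
  assumes "continuous_on UNIV f" "compact (UNIV::'k set)"
  shows "\<exists>B. \<forall>t. \<bar>f t\<bar> \<le> B"
proof -
  have "compact (f ` UNIV)" by (rule compact_continuous_image[OF assms(1,2)])
  then have "bounded (f ` UNIV)" by (rule compact_imp_bounded)
  then show ?thesis unfolding bounded_real by auto
qed

lemma Fam_cont: "generating_system Fam \<Longrightarrow> a \<in> Fam \<Longrightarrow> continuous_on UNIV a"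
  unfolding generating_system_def cont_fns_def by auto




lemma cancel_help:
  fixes a e c Y :: real
  assumes "Y \<noteq> 0"
  shows "a * (e / (c * Y)) * Y = a * e / c"
proof (cases "c = 0")
  case True then show ?thesis by simp
next
  case False then show ?thesis using assms by (simp add: field_simps)
qed

lemma approx_QC:
  fixes q :: "(nat \<times> nat \<Rightarrow> 'k::topological_space) \<Rightarrow> real"
  assumes cK: "compact (UNIV::'k set)" and gen: "generating_system Fam"
    and q: "q \<in> QC k" and e: "0 < e"
  shows "\<exists>g. lc (QF Fam k) g \<and> (\<forall>x. \<bar>q x - g x\<bar> < e)"
proof -
  obtain h where hc: "\<And>p. continuous_on UNIV (h p)" and hq: "q = (\<lambda>x. \<Prod>p\<in>pairs k. h p (x p))"
    using q unfolding QC_def by blast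
  define P where "P = pairs k"
  define m where "m = card P"
  have "\<forall>p. \<exists>B. \<forall>t. \<bar>h p t\<bar> \<le> B" using cont_bound[OF hc cK] by blast
  from choice[OF this] obtain Bf where Bf0: "\<forall>p t. \<bar>h p t\<bar> \<le> Bf p" by blast
  then have Bf: "\<And>p t. \<bar>h p t\<bar> \<le> Bf p" by blast
  define B where "B = (\<Sum>p\<in>P. \<bar>Bf p\<bar>)"
  have B0: "0 \<le> B" unfolding B_def by (simp add: sum_nonneg)
  have hB: "\<bar>h p t\<bar> \<le> B" if "p \<in> P" for p t
  proof -
    have "\<bar>Bf p\<bar> \<le> B" unfolding B_def P_def
      by (rule member_le_sum) (use that P_def in auto)
    then show ?thesis using Bf[of p t] by linarith
  qed
  define \<delta> where "\<delta> = min 1 (e / (2 * (real m + 1) * (B + 1) ^ m))"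
  have Bp: "0 < (B + 1) ^ m" using B0 by simp
  have dpos: "0 < \<delta>" unfolding \<delta>_def using e Bp by simp
  have d1: "\<delta> \<le> 1" unfolding \<delta>_def by simp
  have genall: "\<forall>f\<in>cont_fns. \<forall>e>0. \<exists>m (c::nat \<Rightarrow> real) h.
        (\<forall>i<m. h i \<in> Fam) \<and> (\<forall>x. \<bar>f x - (\<Sum>i<m. c i * h i x)\<bar> < e)"
    using gen unfolding generating_system_def by blast
  have gs: "\<forall>p. \<exists>z::nat \<times> (nat \<Rightarrow> real) \<times> (nat \<Rightarrow> 'k \<Rightarrow> real). (\<forall>i<fst z. snd (snd z) i \<in> Fam) \<and>
      (\<forall>t. \<bar>h p t - (\<Sum>i<fst z. fst (snd z) i * snd (snd z) i t)\<bar> < \<delta>)"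
  proof
    fix p
    have "h p \<in> cont_fns" unfolding cont_fns_def using hc by simp
    from genall[rule_format, OF this dpos] obtain mm and c :: "nat \<Rightarrow> real" and a :: "nat \<Rightarrow> 'k \<Rightarrow> real" where
      mca: "\<forall>i<mm. a i \<in> Fam" "\<forall>t. \<bar>h p t - (\<Sum>i<mm. c i * a i t)\<bar> < \<delta>" by blast
    show "\<exists>z::nat \<times> (nat \<Rightarrow> real) \<times> (nat \<Rightarrow> 'k \<Rightarrow> real). (\<forall>i<fst z. snd (snd z) i \<in> Fam) \<and>
      (\<forall>t. \<bar>h p t - (\<Sum>i<fst z. fst (snd z) i * snd (snd z) i t)\<bar> < \<delta>)"
      by (rule exI[of _ "(mm, c, a)"]) (simp add: mca)
  qed
  from choice[OF gs] obtain Z :: "nat \<times> nat \<Rightarrow> nat \<times> (nat \<Rightarrow> real) \<times> (nat \<Rightarrow> 'k \<Rightarrow> real)" where Z: "\<forall>p. (\<forall>i<fst (Z p). snd (snd (Z p)) i \<in> Fam) \<and>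
      (\<forall>t. \<bar>h p t - (\<Sum>i<fst (Z p). fst (snd (Z p)) i * snd (snd (Z p)) i t)\<bar> < \<delta>)" by blast
  define MM where "MM = (\<lambda>p. fst (Z p))"
  define CC where "CC = (\<lambda>p. fst (snd (Z p)))"
  define AA where "AA = (\<lambda>p. snd (snd (Z p)))"
  have MCA: "\<And>p i. i < MM p \<Longrightarrow> AA p i \<in> Fam"
      "\<And>p t. \<bar>h p t - (\<Sum>i<MM p. CC p i * AA p i t)\<bar> < \<delta>"
    using Z unfolding MM_def CC_def AA_def by blast+
  define g where "g = (\<lambda>x. \<Prod>p\<in>P. (\<Sum>i<MM p. CC p i * AA p i (x p)))"
  have err: "\<bar>q x - g x\<bar> < e" for x
  proof -
    have "\<bar>q x - g x\<bar> \<le> real m * \<delta> * (B + 1) ^ m"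
      unfolding hq g_def m_def P_def[symmetric]
    proof (rule prod_diff_bound)
      show "finite P" unfolding P_def by simp
      show "0 \<le> \<delta>" using dpos by simp
      show "\<delta> \<le> 1" by (rule d1)
      show "0 \<le> B" by (rule B0)
      fix p assume "p \<in> P"
      then show "\<bar>h p (x p)\<bar> \<le> B" by (rule hB)
      show "\<bar>h p (x p) - (\<Sum>i<MM p. CC p i * AA p i (x p))\<bar> \<le> \<delta>"
        using MCA(2)[of p "x p"] by simp
    qed
    also have "\<dots> \<le> real m * (e / (2 * (real m + 1) * (B + 1) ^ m)) * (B + 1) ^ m"
      using Bp dpos unfolding \<delta>_def by (intro mult_right_mono mult_left_mono) auto
    also have "\<dots> = real m * e / (2 * (real m + 1))"
      by (rule cancel_help) (use Bp in linarith)
    also have "\<dots> < e"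
    proof -
      have "e * real m < e * (2 * (real m + 1))" using e by (intro mult_strict_left_mono) auto
      then show ?thesis by (simp add: pos_divide_less_eq mult.commute)
    qed
    finally show ?thesis .
  qed
  define \<Sigma> where "\<Sigma> = PiE P (\<lambda>p. {..<MM p})"
  define cs where "cs = (\<lambda>\<sigma>. \<Prod>p\<in>P. CC p (\<sigma> p))"
  define qs where "qs = (\<lambda>\<sigma> (x::nat\<times>nat\<Rightarrow>'k). \<Prod>p\<in>P. AA p (\<sigma> p) (x p))"
  have finP: "finite P" unfolding P_def by simp
  have gsum: "g = (\<lambda>x. \<Sum>\<sigma>\<in>\<Sigma>. cs \<sigma> * qs \<sigma> x)"
  proof
    fix x
    have "g x = (\<Sum>\<sigma>\<in>\<Sigma>. \<Prod>p\<in>P. CC p (\<sigma> p) * AA p (\<sigma> p) (x p))"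
      unfolding g_def \<Sigma>_def by (rule prod_sum_PiE) (use finP in auto)
    also have "\<dots> = (\<Sum>\<sigma>\<in>\<Sigma>. cs \<sigma> * qs \<sigma> x)"
      unfolding cs_def qs_def by (simp add: prod.distrib)
    finally show "g x = (\<Sum>\<sigma>\<in>\<Sigma>. cs \<sigma> * qs \<sigma> x)" .
  qed
  have "lc (QF Fam k) g"
    unfolding gsum
  proof (rule lc_sum)
    show "finite \<Sigma>" unfolding \<Sigma>_def using finP by (simp add: finite_PiE)
    fix \<sigma> assume s: "\<sigma> \<in> \<Sigma>"
    have "\<forall>p\<in>pairs k. AA p (\<sigma> p) \<in> Fam"
      using s MCA(1) unfolding \<Sigma>_def P_def by (auto simp: PiE_iff)
    then show "qs \<sigma> \<in> QF Fam k" unfolding QF_def qs_def P_def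
      by (intro CollectI exI[of _ "\<lambda>p. AA p (\<sigma> p)"] conjI refl)
  qed
  then show ?thesis using err by blast
qed

lemma approx_lc:
  fixes g0 :: "(nat \<times> nat \<Rightarrow> 'k::topological_space) \<Rightarrow> real"
  assumes cK: "compact (UNIV::'k set)" and gen: "generating_system Fam"
  shows "lc (QC k) g0 \<Longrightarrow> 0 < e \<Longrightarrow> \<exists>g. lc (QF Fam k) g \<and> (\<forall>x. \<bar>g0 x - g x\<bar> < e)"
proof (induction g0 arbitrary: e rule: lc.induct)
  case lc0 then show ?case by (intro exI[of _ "\<lambda>x. 0"]) (simp add: lc.lc0)
next
  case (lcS q g0 c)
  define e1 where "e1 = e / (2 * (\<bar>c\<bar> + 1))"
  have e1: "0 < e1" unfolding e1_def using lcS.prems by simp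
  obtain q' where q': "lc (QF Fam k) q'" "\<And>x. \<bar>q x - q' x\<bar> < e1"
    using approx_QC[OF cK gen lcS.hyps(1) e1] by blast
  obtain g' where g': "lc (QF Fam k) g'" "\<And>x. \<bar>g0 x - g' x\<bar> < e / 2"
    using lcS.IH[of "e/2"] lcS.prems by auto
  have "lc (QF Fam k) (\<lambda>x. c * q' x + g' x)" by (rule lc_add[OF lc_scale[OF q'(1)] g'(1)])
  moreover have "\<bar>(c * q x + g0 x) - (c * q' x + g' x)\<bar> < e" for x
  proof -
    have "\<bar>c * (q x - q' x)\<bar> \<le> \<bar>c\<bar> * e1" unfolding abs_mult
      using q'(2)[of x] by (intro mult_left_mono) auto
    also have "\<bar>c\<bar> * e1 \<le> e / 2" unfolding e1_def using lcS.prems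
      by (simp add: field_simps)
    finally have 1: "\<bar>c * (q x - q' x)\<bar> \<le> e / 2" .
    have "\<bar>(c * q x + g0 x) - (c * q' x + g' x)\<bar> = \<bar>c * (q x - q' x) + (g0 x - g' x)\<bar>"
      by (simp add: algebra_simps)
    also have "\<dots> \<le> \<bar>c * (q x - q' x)\<bar> + \<bar>g0 x - g' x\<bar>" by (rule abs_triangle_ineq)
    finally show ?thesis using 1 g'(2)[of x] by linarith
  qed
  ultimately show ?case by blast
qed




lemma samp_lin: "sample_exp n G k (\<lambda>x. c * q x + g x) = c * sample_exp n G k q + sample_exp n G k g"
  unfolding sample_exp_def by (simp add: sum.distrib sum_distrib_left add_divide_distrib)

lemma samp_zero: "sample_exp n G k (\<lambda>x. 0) = 0"
  unfolding sample_exp_def by simp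

lemma samp_close:
  assumes "\<forall>x\<in>PiE (pairs k) (\<lambda>_. UNIV). \<bar>f x - g x\<bar> < e" "0 < e"
  shows "\<bar>sample_exp n G k f - sample_exp n G k g\<bar> \<le> e"
proof -
  define I where "I = inj_tuples k n"
  define r where "r = (\<lambda>\<phi>. restrict (\<lambda>(i,j). G (\<phi> i) (\<phi> j)) (pairs k))"
  have rin: "r \<phi> \<in> PiE (pairs k) (\<lambda>_. UNIV)" for \<phi> unfolding r_def by simp
  have eq: "sample_exp n G k f - sample_exp n G k g = (\<Sum>\<phi>\<in>I. f (r \<phi>) - g (r \<phi>)) / real (card I)"
    unfolding sample_exp_def I_def[symmetric] r_def by (simp add: sum_subtractf diff_divide_distrib)
  show ?thesis
  proof (cases "card I = 0")
    case True then show ?thesis unfolding eq using assms(2) by simp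
  next
    case False
    then have fin: "finite I" by (meson card.infinite)
    have "\<bar>\<Sum>\<phi>\<in>I. f (r \<phi>) - g (r \<phi>)\<bar> \<le> (\<Sum>\<phi>\<in>I. \<bar>f (r \<phi>) - g (r \<phi>)\<bar>)" by (rule sum_abs)
    also have "\<dots> \<le> (\<Sum>\<phi>\<in>I. e)" by (rule sum_mono) (use assms(1) rin in \<open>auto intro: less_imp_le\<close>)
    also have "\<dots> = real (card I) * e" by simp
    finally have "\<bar>\<Sum>\<phi>\<in>I. f (r \<phi>) - g (r \<phi>)\<bar> / real (card I) \<le> e"
      using False by (simp add: divide_le_eq mult.commute)
    then show ?thesis unfolding eq by simp
  qed
qed

lemma fin_bound:
  fixes H :: "'i \<Rightarrow> 'k::topological_space \<Rightarrow> real"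
  assumes "finite P" "\<And>p. p \<in> P \<Longrightarrow> continuous_on UNIV (H p)" "compact (UNIV :: 'k set)"
  shows "\<exists>B. \<forall>p\<in>P. \<forall>t. \<bar>H p t\<bar> \<le> B"
  using assms(1,2)
proof (induction P rule: finite_induct)
  case empty then show ?case by simp
next
  case (insert x P)
  obtain B1 where B1: "\<forall>t. \<bar>H x t\<bar> \<le> B1" using cont_bound[OF insert.prems[of x] assms(3)] by auto
  obtain B2 where B2: "\<forall>p\<in>P. \<forall>t. \<bar>H p t\<bar> \<le> B2" using insert by auto
  show ?case
  proof (intro exI[of _ "max B1 B2"] ballI allI)
    fix p t assume "p \<in> insert x P"
    show "\<bar>H p t\<bar> \<le> max B1 B2"
    proof (cases "p = x")
      case True then show ?thesis using B1 by (simp add: max.coboundedI1)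
    next
      case False then have "p \<in> P" using \<open>p \<in> insert x P\<close> by simp
      then show ?thesis using B2 by (simp add: max.coboundedI2)
    qed
  qed
qed

lemma prodf_alt: "prodf k F = (\<lambda>x. \<Prod>p\<in>pairs k. F (fst p) (snd p) (x p))"
  unfolding prodf_def by (intro ext prod.cong) auto

lemma prodf_cont:
  assumes "\<And>i j. (i,j) \<in> pairs k \<Longrightarrow> continuous_on UNIV (F i j)"
  shows "continuous_map (product_topology (\<lambda>_. euclidean) (pairs k)) euclidean (prodf k F)"
  unfolding prodf_alt
proof (rule continuous_map_prod)
  show "finite (pairs k)" by simp
  fix p assume p: "p \<in> pairs k"
  have c: "continuous_map euclidean euclidean (F (fst p) (snd p))"
    using assms[of "fst p" "snd p"] p by simp
  show "continuous_map (product_topology (\<lambda>_. euclidean) (pairs k)) euclideanreal (\<lambda>x. F (fst p) (snd p) (x p))"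
    using continuous_map_compose[OF continuous_map_product_projection[OF p] c] by (simp add: o_def)
qed

lemma Fam_ne:
  assumes "generating_system (Fam :: ('k::topological_space \<Rightarrow> real) set)"
  shows "\<exists>a. a \<in> Fam"
proof (rule ccontr)
  assume ne: "\<nexists>a. a \<in> Fam"
  have "(\<lambda>x::'k. 1::real) \<in> cont_fns" unfolding cont_fns_def by simp
  have gen: "\<forall>f\<in>cont_fns. \<forall>e>0. \<exists>m (c::nat \<Rightarrow> real) h.
        (\<forall>i<m. h i \<in> Fam) \<and> (\<forall>x. \<bar>f x - (\<Sum>i<m. c i * h i x)\<bar> < e)"
    using assms unfolding generating_system_def by blast
  from gen[rule_format, OF \<open>(\<lambda>x::'k. 1::real) \<in> cont_fns\<close>, of 1]
  obtain m and c :: "nat \<Rightarrow> real" and h where mch: "\<forall>i<m. h i \<in> Fam" "\<forall>x::'k. \<bar>1 - (\<Sum>i<m. c i * h i x)\<bar> < (1::real)"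
    by auto
  have "m = 0" using mch(1) ne by (metis gr0I)
  then show False using mch(2) by simp
qed




lemma QF_conv:
  fixes Gs :: "nat \<Rightarrow> nat \<Rightarrow> nat \<Rightarrow> 'k::topological_space"
  assumes cK: "compact (UNIV :: 'k set)" and gen: "generating_system Fam"
    and N: "filterlim N at_top sequentially"
    and iii: "\<forall>k F. 0 < k \<and> dgraph_in Fam k F \<longrightarrow> convergent (\<lambda>n. hom_dens k F (N n) (Gs n))"
    and k: "0 < k" and q: "q \<in> QF Fam k"
  shows "convergent (\<lambda>n. sample_exp (N n) (Gs n) k q)"
proof -
  obtain h where h: "\<forall>p\<in>pairs k. h p \<in> Fam" and hq: "q = (\<lambda>x. \<Prod>p\<in>pairs k. h p (x p))"
    using q unfolding QF_def by blast
  obtain a0 where a0: "a0 \<in> Fam" using Fam_ne[OF gen] by blast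
  define F where "F = (\<lambda>i j. if (i,j) \<in> pairs k then h (i,j) else if (j,i) \<in> pairs k then h (j,i) else a0)"
  have dg: "dgraph_in Fam k F"
    unfolding dgraph_in_def
  proof (intro allI impI conjI)
    fix i j assume "i < k" "j < k"
    show "F i j \<in> Fam" unfolding F_def using h a0 by auto
    show "F i j = F j i" unfolding F_def by (auto simp: pairs_def)
  qed
  have pq: "prodf k F = q"
    unfolding prodf_def hq
  proof (intro ext prod.cong refl)
    fix x p assume "p \<in> pairs k"
    then show "(case p of (i, j) \<Rightarrow> F i j (x (i, j))) = h p (x p)"
      unfolding F_def by (cases p) auto
  qed
  obtain B where B: "\<forall>p\<in>pairs k. \<forall>t. \<bar>h p t\<bar> \<le> B"
    using fin_bound[of "pairs k" h, OF finite_pairs _ cK] h Fam_cont[OF gen] by blast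
  have Bij: "\<And>i j t. (i, j) \<in> pairs k \<Longrightarrow> \<bar>F i j t\<bar> \<le> B"
    using B unfolding F_def by auto
  have "convergent (\<lambda>n. hom_dens k F (N n) (Gs n))" using iii k dg by blast
  then show ?thesis
    using conv_diff[OF diff_lim[OF Bij N, where Gs=Gs]] pq by simp
qed

lemma lc_conv:
  assumes "\<And>q. q \<in> Q \<Longrightarrow> convergent (\<lambda>n. sample_exp (N n) (Gs n) k q)"
  shows "lc Q g \<Longrightarrow> convergent (\<lambda>n. sample_exp (N n) (Gs n) k g)"
proof (induction g rule: lc.induct)
  case lc0 then show ?case by (simp add: samp_zero convergent_const)
next
  case (lcS q g c)
  obtain l1 where l1: "(\<lambda>n. sample_exp (N n) (Gs n) k q) \<longlonglongrightarrow> l1"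
    using assms[OF lcS.hyps(1)] by (auto simp: convergent_def)
  obtain l2 where l2: "(\<lambda>n. sample_exp (N n) (Gs n) k g) \<longlonglongrightarrow> l2"
    using lcS.IH by (auto simp: convergent_def)
  have "(\<lambda>n. c * sample_exp (N n) (Gs n) k q + sample_exp (N n) (Gs n) k g) \<longlonglongrightarrow> c * l1 + l2"
    by (intro tendsto_add tendsto_mult tendsto_const l1 l2)
  then show ?case unfolding samp_lin convergent_def by blast
qed

theorem theorem1:
  fixes Gs :: "nat \<Rightarrow> nat \<Rightarrow> nat \<Rightarrow> 'k::{second_countable_topology, t2_space}"
    and N :: "nat \<Rightarrow> nat"
    and Fam :: "('k \<Rightarrow> real) set"
  assumes "compact (UNIV :: 'k set)"
    and "generating_system Fam"
    and "\<And>n. N n > 0"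
    and "\<And>n. dgraph (N n) (Gs n)"
    and "filterlim N at_top sequentially"
  shows "(dg_convergent N Gs \<longleftrightarrow>
            (\<forall>k F. 0 < k \<and> dgraph_in cont_fns k F \<longrightarrow>
                convergent (\<lambda>n. hom_dens k F (N n) (Gs n))))
       \<and> ((\<forall>k F. 0 < k \<and> dgraph_in cont_fns k F \<longrightarrow>
                convergent (\<lambda>n. hom_dens k F (N n) (Gs n))) \<longleftrightarrow>
            (\<forall>k F. 0 < k \<and> dgraph_in Fam k F \<longrightarrow>
                convergent (\<lambda>n. hom_dens k F (N n) (Gs n))))"
proof -
  note cK = assms(1) and gen = assms(2) and Nlim = assms(5)
  let ?ii = "\<forall>k F. 0 < k \<and> dgraph_in cont_fns k F \<longrightarrow> convergent (\<lambda>n. hom_dens k F (N n) (Gs n))"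
  let ?iii = "\<forall>k F. 0 < k \<and> dgraph_in Fam k F \<longrightarrow> convergent (\<lambda>n. hom_dens k F (N n) (Gs n))"
  have i_ii: "?ii" if i: "dg_convergent N Gs"
  proof (intro allI impI)
    fix k and F :: "nat \<Rightarrow> nat \<Rightarrow> 'k \<Rightarrow> real"
    assume kF: "0 < k \<and> dgraph_in cont_fns k F"
    have Fc: "\<And>i j. (i,j) \<in> pairs k \<Longrightarrow> continuous_on UNIV (F i j)"
    proof -
      fix i j assume "(i,j) \<in> pairs k"
      then have "i < k" "j < k" unfolding pairs_def by auto
      then have "F i j \<in> cont_fns" using kF unfolding dgraph_in_def by blast
      then show "continuous_on UNIV (F i j)" unfolding cont_fns_def by simp
    qed
    have "convergent (\<lambda>n. sample_exp (N n) (Gs n) k (prodf k F))"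
      by (rule i[unfolded dg_convergent_def, rule_format, OF prodf_cont[OF Fc]])
    have Fc': "\<And>p. p \<in> pairs k \<Longrightarrow> continuous_on UNIV (F (fst p) (snd p))"
    proof -
      fix p assume "p \<in> pairs k"
      then have "(fst p, snd p) \<in> pairs k" by simp
      then show "continuous_on UNIV (F (fst p) (snd p))" by (rule Fc)
    qed
    obtain B where B: "\<forall>p\<in>pairs k. \<forall>t. \<bar>F (fst p) (snd p) t\<bar> \<le> B"
      using fin_bound[of "pairs k" "\<lambda>p. F (fst p) (snd p)", OF finite_pairs Fc' cK] by blast
    have Bij: "\<bar>F i j t\<bar> \<le> B" if "(i, j) \<in> pairs k" for i j t
      using B that by force
    show "convergent (\<lambda>n. hom_dens k F (N n) (Gs n))"
      using conv_diff[OF diff_lim[OF Bij Nlim, where Gs=Gs]] \<open>convergent (\<lambda>n. sample_exp (N n) (Gs n) k (prodf k F))\<close>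
      by simp
  qed
  have ii_iii: "?iii" if ii: "?ii"
  proof (intro allI impI)
    fix k and F :: "nat \<Rightarrow> nat \<Rightarrow> 'k \<Rightarrow> real"
    assume kF: "0 < k \<and> dgraph_in Fam k F"
    have "Fam \<subseteq> cont_fns" using gen unfolding generating_system_def by blast
    then have "dgraph_in cont_fns k F" using kF unfolding dgraph_in_def by blast
    then show "convergent (\<lambda>n. hom_dens k F (N n) (Gs n))" using ii kF by blast
  qed
  have iii_i: "dg_convergent N Gs" if iii: "?iii"
    unfolding dg_convergent_def
  proof (intro allI impI)
    fix k and f :: "(nat \<times> nat \<Rightarrow> 'k) \<Rightarrow> real"
    assume f: "continuous_map (product_topology (\<lambda>_. euclidean) (pairs k)) euclidean f"
    show "convergent (\<lambda>n. sample_exp (N n) (Gs n) k f)"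
    proof (cases "k = 0")
      case True
      have it: "inj_tuples 0 n = {\<lambda>_. undefined}" for n
        unfolding inj_tuples_def by (simp add: PiE_empty_domain)
      have p0: "pairs 0 = {}" unfolding pairs_def by auto
      have "(\<lambda>n. sample_exp (N n) (Gs n) k f) = (\<lambda>n. f (\<lambda>_. undefined))"
      proof
        fix n
        show "sample_exp (N n) (Gs n) k f = f (\<lambda>_. undefined)"
          unfolding sample_exp_def True it p0 by (simp add: restrict_def)
      qed
      then show ?thesis by (simp add: convergent_const)
    next
      case False
      then have k: "0 < k" by simp
      show ?thesis
      proof (rule conv_approx)
        fix e :: real assume e: "0 < e"
        have e2: "0 < e / 2" using e by simp
        from SW[OF cK f e2] obtain g0 where g0: "lc (QC k) g0" "\<forall>x\<in>PiE (pairs k) (\<lambda>_. UNIV). \<bar>f x - g0 x\<bar> < e / 2"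
          by blast
        from approx_lc[OF cK gen g0(1) e2] obtain g where g: "lc (QF Fam k) g" "\<forall>x. \<bar>g0 x - g x\<bar> < e / 2"
          by blast
        have fg: "\<forall>x\<in>PiE (pairs k) (\<lambda>_. UNIV). \<bar>f x - g x\<bar> < e"
        proof
          fix x :: "nat \<times> nat \<Rightarrow> 'k" assume "x \<in> PiE (pairs k) (\<lambda>_. UNIV)"
          then have "\<bar>f x - g0 x\<bar> < e / 2" using g0(2) by blast
          moreover have "\<bar>g0 x - g x\<bar> < e / 2" using g(2) by blast
          ultimately show "\<bar>f x - g x\<bar> < e" by linarith
        qed
        have "convergent (\<lambda>n. sample_exp (N n) (Gs n) k g)"
          by (rule lc_conv[OF QF_conv[OF cK gen Nlim iii k] g(1)])
        moreover have "\<forall>n. \<bar>sample_exp (N n) (Gs n) k f - sample_exp (N n) (Gs n) k g\<bar> \<le> e"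
          using samp_close[OF fg e] by blast
        ultimately show "\<exists>b. convergent b \<and> (\<forall>n. \<bar>sample_exp (N n) (Gs n) k f - b n\<bar> \<le> e)"
          by (intro exI[of _ "\<lambda>n. sample_exp (N n) (Gs n) k g"] conjI)
      qed
    qed
  qed
  show ?thesis
  proof (intro conjI iffI)
    assume "dg_convergent N Gs" then show ?ii by (rule i_ii)
  next
    assume ?ii then show "dg_convergent N Gs" by (intro iii_i ii_iii)
  next
    assume ?ii then show ?iii by (rule ii_iii)
  next
    assume ?iii then have "dg_convergent N Gs" by (rule iii_i)
    then show ?ii by (rule i_ii)
  qed
qed


end
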